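(* Let $g\ge2$, $n\ge1$, let $(t_1,\ldots,t_n)$ be a generic $n$-tuple of elements of $T$, let $l\in\{1,\ldots,n\}$, let $X$ and $Y$ be disjoint sets with $X\sqcup Y=\{c_i\mid i\in\{1,\ldots,n\}\setminus\{l\}\}$, let $(i,j,k)$ be a permutation of $(1,2,3)$, and let $f:\{1,\ldots,n\}\to\{1,2,3\}$ be a function. Then the collection of sections $$\{s^l_{ij}(x), s^l_{ik}(x)\mid x\in\{a_1,\ldots,a_g,b_1,\ldots,b_g\}\cup X\}\cup\{s^l_{f(q),j}(c_q), s^l_{f(q),k}(c_q)\mid c_q\in Y\}$$ has no common zeros on $S_g(t_1,\ldots,t_n)$.
   Context: Let $\Sigma$ be a compact Riemann surface of genus $g$, $p_1,\ldots,p_n\in\Sigma$ distinct points, and fix the presentation $\pi_1(\Sigma\setminus\{p_1,\ldots,p_n\}) = \langle a_1,\ldots,a_g,b_1,\ldots,b_g,c_1,\ldots,c_n \mid \prod_{i=1}^g[a_i,b_i]=\prod_{j=1}^n c_j\rangle$. Let $G=SU(3)$, $T\subset G$ the diagonal maximal torus. An $n$-tuple $(t_1,\ldots,t_n)$ in $T$ is generic if each $t_j$ has centralizer $T$ in $G$ and no product $\lambda_1\cdots\lambda_n$ with $\lambda_i$ an eigenvalue of $t_i$ equals $1$. Let $S_g(t_1,\ldots,t_n) := \{\rho\in\mathrm{Hom}(\pi_1(\Sigma\setminus\{p_1,\ldots,p_n\}),G)\mid\rho(c_i)\sim t_i\ \forall i\}/G$ (conjugation quotient), and $V^l_g(t_1,\ldots,t_n):=\{\rho\mid\rho(c_l)=t_l,\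 \rho(c_i)\sim t_i\ \forall i\}$, a $T$-bundle over $S_g(t_1,\ldots,t_n)$ under conjugation. For $1\le j,k\le 3$ let $\mathbb{C}_{(jk)}$ (resp. $\mathbb{C}_{(j)}$) be the representation of $T$ in which $\mathrm{diag}(e^{i\theta_1},e^{i\theta_2},e^{i\theta_3})$ acts by $e^{i(\theta_j-\theta_k)}$ (resp. $e^{i\theta_j}$), and $L^l_{jk}$ (resp. $L^l_j$) the associated line bundle over $S_g(t_1,\ldots,t_n)$. Two kinds of sections are used (note the comma distinguishing them). (i) For a generator $x\in\{a_1,\ldots,a_g,b_1,\ldots,b_g,c_1,\ldots,c_n\}\setminus\{c_l\}$, $s^l_{jk}(x)$ is the section of $L^l_{jk}$ induced by the $T$-equivariant map $\rho\mapsto(\rho(x))_{jk}$ on $V^l_g(t_1,\ldots,t_n)$; it vanishes at $[\rho]$ iff $(\rho(x))_{jk}=0$ for a representative $\rho\in V^l_g(t_1,\ldots,t_n)$. (ii) For $c_{i'}$ with $i'\neq l$, $s^l_{j,k}(c_{i'})$ is a section of $L^l_j$ defined via a matrix $A\in SU(3)$ with $A\rho(c_{i'})A^{-1}=t_{i'}$ ($\rho\in V^l_g(t_1,\ldots,t_n)$ a representative; $A$ unique up to left multiplication by $T$), taking value given by $A_{jk}$; it vanishes at $[\rho]$ iff $A_{jk}=0$, equivalently iff the $k$-th coordinate of an eigenvector of $\rho(c_{i'})$ with eigenvalue $(t_{i'})_{jj}$ is zero. *)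

theory Defs
  imports "HOL-Analysis.Analysis" "HOL-Library.Numeral_Type"
begin

text \<open>3x3 complex matrices; rows/columns indexed by the 3-element type 3
  (its three elements play the role of the indices 1,2,3).\<close>
type_synonym cmat3 = "complex^3^3"

definition adj3 :: "cmat3 \<Rightarrow> cmat3" where
  "adj3 A = (\<chi> r s. cnj (A $ s $ r))"

definition SU3 :: "cmat3 set" where
  "SU3 = {A. A ** adj3 A = mat 1 \<and> det A = 1}"

definition torus3 :: "cmat3 set" where
  "torus3 = {A \<in> SU3. \<forall>r s. r \<noteq> s \<longrightarrow> A $ r $ s = 0}"

definition centralizer3 :: "cmat3 \<Rightarrow> cmat3 set" where
  "centralizer3 t = {h \<in> SU3. h ** t = t ** h}"

definition is_eigenvalue3 :: "cmat3 \<Rightarrow> complex \<Rightarrow> bool" where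
  "is_eigenvalue3 t mu \<longleftrightarrow> (\<exists>v. v \<noteq> 0 \<and> t *v v = mu *s v)"

definition generic :: "nat \<Rightarrow> (nat \<Rightarrow> cmat3) \<Rightarrow> bool" where
  "generic n t \<longleftrightarrow>
     (\<forall>q\<in>{1..n}. t q \<in> torus3 \<and> centralizer3 (t q) = torus3) \<and>
     (\<forall>ev::nat \<Rightarrow> complex. (\<forall>q\<in>{1..n}. is_eigenvalue3 (t q) (ev q))
        \<longrightarrow> (\<Prod>q=1..n. ev q) \<noteq> 1)"

definition conj_SU3 :: "cmat3 \<Rightarrow> cmat3 \<Rightarrow> bool" where
  "conj_SU3 A B \<longleftrightarrow> (\<exists>P\<in>SU3. P ** A ** matrix_inv P = B)"

definition commutator3 :: "cmat3 \<Rightarrow> cmat3 \<Rightarrow> cmat3" where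
  "commutator3 x y = x ** y ** matrix_inv x ** matrix_inv y"

definition oprod3 :: "(nat \<Rightarrow> cmat3) \<Rightarrow> nat \<Rightarrow> cmat3" where
  "oprod3 M m = foldr (\<lambda>q acc. M q ** acc) [1..<m+1] (mat 1)"

text \<open>A representation rho of pi_1 of the n-punctured genus g surface into SU(3),
  given by the images a_1..a_g, b_1..b_g, c_1..c_n of the generators, subject to
  prod [a_i,b_i] = prod c_j.\<close>
definition is_rep :: "nat \<Rightarrow> nat \<Rightarrow> (nat \<Rightarrow> cmat3) \<Rightarrow> (nat \<Rightarrow> cmat3) \<Rightarrow> (nat \<Rightarrow> cmat3) \<Rightarrow> bool" where
  "is_rep g n a b c \<longleftrightarrow>
     (\<forall>m\<in>{1..g}. a m \<in> SU3 \<and> b m \<in> SU3) \<and> (\<forall>q\<in>{1..n}. c q \<in> SU3) \<and>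
     oprod3 (\<lambda>m. commutator3 (a m) (b m)) g = oprod3 c n"

definition in_V :: "nat \<Rightarrow> nat \<Rightarrow> (nat \<Rightarrow> cmat3) \<Rightarrow> nat \<Rightarrow>
    (nat \<Rightarrow> cmat3) \<Rightarrow> (nat \<Rightarrow> cmat3) \<Rightarrow> (nat \<Rightarrow> cmat3) \<Rightarrow> bool" where
  "in_V g n t l a b c \<longleftrightarrow> is_rep g n a b c \<and> c l = t l \<and>
     (\<forall>q\<in>{1..n}. conj_SU3 (c q) (t q))"

text \<open>Vanishing of the section s^l_{r,s}(c_q) at the class of a representative with
  rho(c_q) = C: A_{rs} = 0 for A in SU(3) with A C A^{-1} = t_q (A is unique up to
  left multiplication by T, so this does not depend on the choice of A).\<close>
definition comma_section_vanishes :: "cmat3 \<Rightarrow> cmat3 \<Rightarrow> 3 \<Rightarrow> 3 \<Rightarrow> bool" where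
  "comma_section_vanishes C tq r s \<longleftrightarrow>
     (\<forall>A\<in>SU3. A ** C ** matrix_inv A = tq \<longrightarrow> A $ r $ s = 0)"

end

theory Submission
  imports Defs
begin

definition blk :: "3 \<Rightarrow> cmat3 \<Rightarrow> bool" where
  "blk i M \<longleftrightarrow> (\<forall>r. r \<noteq> i \<longrightarrow> M $ i $ r = 0 \<and> M $ r $ i = 0)"

lemma three_cases:
  fixes i j k s :: 3
  assumes "i \<noteq> j" "j \<noteq> k" "i \<noteq> k"
  shows "s = i \<or> s = j \<or> s = k"
  using assms exhaust_3[of i] exhaust_3[of j] exhaust_3[of k] exhaust_3[of s] by metis

lemma sum_single3:
  fixes f :: "3 \<Rightarrow> complex"
  assumes "\<And>u. u \<noteq> i \<Longrightarrow> f u = 0"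
  shows "sum f UNIV = f i"
proof -
  have "f = (\<lambda>u. if u = i then f i else 0)" using assms by auto
  then have "sum f UNIV = sum (\<lambda>u. if u = i then f i else 0) UNIV" by metis
  also have "\<dots> = f i" by simp
  finally show ?thesis .
qed

lemma mm_entry: "((A::cmat3) ** B) $ r $ s = (\<Sum>u\<in>UNIV. A $ r $ u * B $ u $ s)"
  by (simp add: matrix_matrix_mult_def)

lemma blk_mult:
  assumes "blk i A" "blk i B"
  shows "blk i (A ** B) \<and> (A ** B) $ i $ i = A $ i $ i * B $ i $ i"
proof -
  have e: "(A ** B) $ r $ s = A $ r $ i * B $ i $ s" if "r = i \<or> s = i" for r s
    unfolding mm_entry
    by (rule sum_single3) (use assms that in \<open>auto simp: blk_def\<close>)
  show ?thesis using assms unfolding blk_def by (auto simp: e)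
qed

lemma blk_mat1: "blk i (mat 1) \<and> (mat 1 :: cmat3) $ i $ i = 1"
  by (simp add: blk_def mat_def)

lemma su3_inv:
  assumes "A \<in> SU3"
  shows "matrix_inv A = adj3 A \<and> adj3 A ** A = mat 1 \<and> A ** adj3 A = mat 1"
proof -
  have h: "A ** adj3 A = mat 1" using assms by (simp add: SU3_def)
  have h2: "adj3 A ** A = mat 1" using h matrix_left_right_inverse by blast
  have "matrix_inv A = adj3 A"
    unfolding matrix_inv_def
  proof (rule some_equality)
    show "A ** adj3 A = mat 1 \<and> adj3 A ** A = mat 1" using h h2 by simp
  next
    fix A' assume a: "A ** A' = mat 1 \<and> A' ** A = mat 1"
    have "A' = (adj3 A ** A) ** A'" using h2 by simp
    also have "\<dots> = adj3 A" using a by (simp flip: matrix_mul_assoc)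
    finally show "A' = adj3 A" .
  qed
  then show ?thesis using h h2 by simp
qed

lemma unitrow:
  assumes "A \<in> SU3" "\<And>s. s \<noteq> i \<Longrightarrow> A $ r $ s = 0"
  shows "A $ r $ i * cnj (A $ r $ i) = 1 \<and> (\<forall>r'. r' \<noteq> r \<longrightarrow> A $ r' $ i = 0)"
proof -
  have h: "A ** adj3 A = mat 1" using assms by (simp add: SU3_def)
  have e: "(A ** adj3 A) $ r' $ r = A $ r' $ i * cnj (A $ r $ i)" for r'
    unfolding mm_entry adj3_def
    using sum_single3[of i "\<lambda>u. A $ r' $ u * cnj (A $ r $ u)"] assms(2) by auto
  have 1: "A $ r $ i * cnj (A $ r $ i) = 1" using e[of r] h by (simp add: mat_def)
  have "A $ r' $ i = 0" if "r' \<noteq> r" for r'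
  proof -
    have "A $ r' $ i * cnj (A $ r $ i) = 0" using e[of r'] h that by (simp add: mat_def)
    moreover have "cnj (A $ r $ i) \<noteq> 0" using 1 by auto
    ultimately show ?thesis by simp
  qed
  with 1 show ?thesis by blast
qed

lemma blk_of:
  assumes "A \<in> SU3" "\<And>s. s \<noteq> i \<Longrightarrow> A $ i $ s = 0"
  shows "blk i A"
  using unitrow[OF assms] assms(2) unfolding blk_def by auto

lemma blk_adj:
  assumes "blk i A"
  shows "blk i (adj3 A) \<and> adj3 A $ i $ i = cnj (A $ i $ i)"
  using assms by (simp add: blk_def adj3_def)

lemma blk_unit:
  assumes "A \<in> SU3" "blk i A"
  shows "A $ i $ i * cnj (A $ i $ i) = 1"
  using unitrow[OF assms(1), of i i] assms(2) unfolding blk_def by auto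

lemma blk_comm:
  assumes "A \<in> SU3" "B \<in> SU3" "blk i A" "blk i B"
  shows "blk i (commutator3 A B) \<and> commutator3 A B $ i $ i = 1"
proof -
  have iA: "matrix_inv A = adj3 A" and iB: "matrix_inv B = adj3 B"
    using su3_inv assms by auto
  note a = blk_adj[OF assms(3)] blk_adj[OF assms(4)]
  have m1: "blk i (A ** B) \<and> (A ** B) $ i $ i = A $ i $ i * B $ i $ i"
    using blk_mult assms by blast
  have m2: "blk i (A ** B ** adj3 A) \<and> (A ** B ** adj3 A) $ i $ i = A $ i $ i * B $ i $ i * cnj (A $ i $ i)"
    using blk_mult[of i "A ** B" "adj3 A"] m1 a by auto
  have m3: "blk i (A ** B ** adj3 A ** adj3 B) \<and> (A ** B ** adj3 A ** adj3 B) $ i $ i = A $ i $ i * B $ i $ i * cnj (A $ i $ i) * cnj (B $ i $ i)"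
    using blk_mult[of i "A ** B ** adj3 A" "adj3 B"] m2 a by auto
  have "A $ i $ i * B $ i $ i * cnj (A $ i $ i) * cnj (B $ i $ i)
      = (A $ i $ i * cnj (A $ i $ i)) * (B $ i $ i * cnj (B $ i $ i))" by (simp add: ac_simps)
  also have "\<dots> = 1" using blk_unit assms by simp
  finally show ?thesis using m3 unfolding commutator3_def iA iB by simp
qed

lemma blk_foldr:
  assumes "\<forall>q\<in>set xs. blk i (M q)"
  shows "blk i (foldr (\<lambda>q acc. M q ** acc) xs (mat 1)) \<and>
         foldr (\<lambda>q acc. M q ** acc) xs (mat 1) $ i $ i = prod_list (map (\<lambda>q. M q $ i $ i) xs)"
  using assms
proof (induction xs)
  case Nil
  then show ?case using blk_mat1 by simp
next
  case (Cons x xs)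
  then show ?case using blk_mult[of i "M x" "foldr (\<lambda>q acc. M q ** acc) xs (mat 1)"] by simp
qed

lemma blk_oprod3:
  assumes "\<forall>q\<in>{1..m}. blk i (M q)"
  shows "blk i (oprod3 M m) \<and> oprod3 M m $ i $ i = (\<Prod>q=1..m. M q $ i $ i)"
proof -
  have s: "set [1..<m+1] = {1..m}" by auto
  have "(\<Prod>q=1..m. M q $ i $ i) = prod_list (map (\<lambda>q. M q $ i $ i) [1..<m+1])"
    by (metis s prod.distinct_set_conv_list distinct_upt)
  then show ?thesis using blk_foldr[of "[1..<m+1]" i M] assms s unfolding oprod3_def by (simp del: upt_Suc)
qed

lemma torus_blk:
  assumes "D \<in> torus3" shows "blk i D"
  using assms by (simp add: torus3_def blk_def)

lemma blk_Y:
  assumes "C \<in> SU3" "P \<in> SU3" "P ** C ** matrix_inv P = D" "D \<in> torus3"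
    "\<And>s. s \<noteq> i \<Longrightarrow> P $ r $ s = 0"
  shows "blk i C"
proof -
  note inv = su3_inv[OF assms(2)]
  have PC: "P ** C = D ** P"
  proof -
    have "P ** C = P ** C ** (adj3 P ** P)" using inv by (metis matrix_mul_rid)
    also have "\<dots> = (P ** C ** matrix_inv P) ** P" using inv by (metis matrix_mul_assoc)
    finally show ?thesis using assms(3) by simp
  qed
  have ur: "P $ r $ i * cnj (P $ r $ i) = 1" using unitrow[of P i r] assms(2,5) by blast
  have Pne: "P $ r $ i \<noteq> 0" using ur by auto
  have "C $ i $ s = 0" if "s \<noteq> i" for s
  proof -
    have l: "(P ** C) $ r $ s = P $ r $ i * C $ i $ s"
      unfolding mm_entry by (rule sum_single3) (use assms(5) in auto)
    have r: "(D ** P) $ r $ s = D $ r $ r * P $ r $ s"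
      unfolding mm_entry by (rule sum_single3) (use assms(4) in \<open>auto simp: torus3_def\<close>)
    have "P $ r $ i * C $ i $ s = 0" using l r PC assms(5)[OF that] by simp
    then show ?thesis using Pne by simp
  qed
  then show ?thesis using blk_of assms(1) by blast
qed

lemma blk_axis:
  assumes "blk i C"
  shows "C *v axis i 1 = C $ i $ i *s axis i (1::complex)"
proof -
  have "(C *v axis i 1) $ r = C $ r $ i" for r
    unfolding matrix_vector_mult_def by (simp, rule trans, rule sum_single3) (auto simp: axis_def)
  then show ?thesis using assms by (auto simp: vec_eq_iff blk_def axis_def)
qed

lemma mv_scale: "(P::cmat3) *v (c *s v) = c *s (P *v v)"
  by (simp add: vec_eq_iff matrix_vector_mult_def sum_distrib_left ac_simps)

lemma blk_eig:
  assumes "blk i C" "P \<in> SU3" "P ** C ** matrix_inv P = D"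
  shows "is_eigenvalue3 D (C $ i $ i)"
proof -
  note inv = su3_inv[OF assms(2)]
  define e where "e = axis i (1::complex)"
  define v where "v = P *v e"
  have "D *v v = P *v (C *v ((adj3 P ** P) *v e))"
    unfolding v_def assms(3)[symmetric] inv[THEN conjunct1]
    by (simp add: matrix_vector_mul_assoc matrix_mul_assoc)
  also have "\<dots> = C $ i $ i *s v"
    using inv blk_axis[OF assms(1)] by (simp add: e_def v_def mv_scale)
  finally have 1: "D *v v = C $ i $ i *s v" .
  have "v \<noteq> 0"
  proof
    assume "v = 0"
    then have "adj3 P *v v = 0" by simp
    moreover have "adj3 P *v v = e" using inv by (simp add: v_def matrix_vector_mul_assoc)
    ultimately show False by (simp add: e_def axis_eq_0_iff)
  qed
  with 1 show ?thesis unfolding is_eigenvalue3_def by blast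
qed

theorem lemma2p7:
  fixes g n l :: nat and t :: "nat \<Rightarrow> cmat3" and X Y :: "nat set"
    and i j k :: 3 and f :: "nat \<Rightarrow> 3"
  assumes "g \<ge> 2" and "n \<ge> 1" and "generic n t" and "l \<in> {1..n}"
    and "X \<inter> Y = {}" and "X \<union> Y = {1..n} - {l}"
    and "i \<noteq> j" and "j \<noteq> k" and "i \<noteq> k"
  shows "\<forall>a b c. in_V g n t l a b c \<longrightarrow>
           \<not> ((\<forall>m\<in>{1..g}. a m $ i $ j = 0 \<and> a m $ i $ k = 0 \<and>
                           b m $ i $ j = 0 \<and> b m $ i $ k = 0) \<and>
              (\<forall>q\<in>X. c q $ i $ j = 0 \<and> c q $ i $ k = 0) \<and>
              (\<forall>q\<in>Y. comma_section_vanishes (c q) (t q) (f q) j \<and>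
                      comma_section_vanishes (c q) (t q) (f q) k))"
proof (intro allI impI notI)
  fix a b c
  assume V: "in_V g n t l a b c"
  assume H: "(\<forall>m\<in>{1..g}. a m $ i $ j = 0 \<and> a m $ i $ k = 0 \<and>
                           b m $ i $ j = 0 \<and> b m $ i $ k = 0) \<and>
              (\<forall>q\<in>X. c q $ i $ j = 0 \<and> c q $ i $ k = 0) \<and>
              (\<forall>q\<in>Y. comma_section_vanishes (c q) (t q) (f q) j \<and>
                      comma_section_vanishes (c q) (t q) (f q) k)"
  have oth: "s = j \<or> s = k" if "s \<noteq> i" for s
    using three_cases[OF assms(7-9), of s] that by blast
  have rep: "is_rep g n a b c" and cl: "c l = t l" and cj: "\<forall>q\<in>{1..n}. conj_SU3 (c q) (t q)"
    using V by (auto simp: in_V_def)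
  have aSU: "\<forall>m\<in>{1..g}. a m \<in> SU3 \<and> b m \<in> SU3" and cSU: "\<forall>q\<in>{1..n}. c q \<in> SU3"
    and rel: "oprod3 (\<lambda>m. commutator3 (a m) (b m)) g = oprod3 c n"
    using rep by (auto simp: is_rep_def)
  have tor: "\<forall>q\<in>{1..n}. t q \<in> torus3" using assms(3) by (simp add: generic_def)
  have ablk: "blk i (a m) \<and> blk i (b m)" if "m \<in> {1..g}" for m
    using blk_of[of "a m" i] blk_of[of "b m" i] aSU H that oth by blast
  have cblk: "blk i (c q)" if q: "q \<in> {1..n}" for q
  proof -
    consider "q = l" | "q \<in> X" | "q \<in> Y" using assms(6) q by blast
    then show ?thesis
    proof cases
      case 1 then show ?thesis using cl tor torus_blk assms(4) by metis
    next
      case 2 then show ?thesis using blk_of[of "c q" i] cSU q H oth by blast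
    next
      case 3
      obtain P where P: "P \<in> SU3" "P ** c q ** matrix_inv P = t q"
        using cj q unfolding conj_SU3_def by blast
      have "P $ f q $ j = 0" "P $ f q $ k = 0"
        using H 3 P unfolding comma_section_vanishes_def by blast+
      then have "\<And>s. s \<noteq> i \<Longrightarrow> P $ f q $ s = 0" using oth by blast
      then show ?thesis using blk_Y[OF _ P(1) P(2)] cSU tor q by blast
    qed
  qed
  have L: "oprod3 (\<lambda>m. commutator3 (a m) (b m)) g $ i $ i = 1"
  proof -
    have "\<forall>m\<in>{1..g}. blk i (commutator3 (a m) (b m)) \<and> commutator3 (a m) (b m) $ i $ i = 1"
      using blk_comm ablk aSU by blast
    then show ?thesis using blk_oprod3[of g i "\<lambda>m. commutator3 (a m) (b m)"] by simp
  qed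
  have R: "oprod3 c n $ i $ i = (\<Prod>q=1..n. c q $ i $ i)"
    using blk_oprod3[of n i c] cblk by blast
  have eig: "\<forall>q\<in>{1..n}. is_eigenvalue3 (t q) (c q $ i $ i)"
  proof
    fix q assume q: "q \<in> {1..n}"
    obtain P where P: "P \<in> SU3" "P ** c q ** matrix_inv P = t q"
      using cj q unfolding conj_SU3_def by blast
    show "is_eigenvalue3 (t q) (c q $ i $ i)" using blk_eig[OF cblk[OF q] P] .
  qed
  have "(\<Prod>q=1..n. c q $ i $ i) \<noteq> 1"
  proof -
    have "\<forall>ev. (\<forall>q\<in>{1..n}. is_eigenvalue3 (t q) (ev q)) \<longrightarrow> (\<Prod>q=1..n. ev q) \<noteq> 1"
      using assms(3) unfolding generic_def by blast
    then have "(\<forall>q\<in>{1..n}. is_eigenvalue3 (t q) (c q $ i $ i)) \<longrightarrow> (\<Prod>q=1..n. c q $ i $ i) \<noteq> 1"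
      by (rule spec)
    then show ?thesis using eig by blast
  qed
  then show False using L R rel by simp
qed

end
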